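(* Let $\mathcal{A},\mathcal{C}$ be small categories and let $\Gamma,P:\mathcal{A}^{op}\times\mathcal{A}\times\mathcal{C}^{op}\times\mathcal{C}\to\mathbf{Set}$ be functors. Let $h$ be a dinatural transformation, dinatural in $(z,x)\in\mathcal{A}\times\mathcal{C}$, from $(z',z,x',x)\mapsto\Gamma(z',z,x',x)$ to $(z',z,x',x)\mapsto P(z',z,x',x)$, with components $h_{z,x}:\Gamma(z,z,x,x)\to P(z,z,x,x)$. Then there is a dinatural transformation $J(h)$, dinatural in $(a,b,x)\in\mathcal{A}^{op}\times\mathcal{A}\times\mathcal{C}$, from the dipresheaf $(a',b',x',a,b,x)\mapsto \hom_{\mathcal{A}}(a,b)\times\Gamma(b',a',x',x)$ to the dipresheaf $(a',b',x',a,b,x)\mapsto P(a,b,x',x)$ (here $a'\in\mathcal{A}$, $b'\in\mathcal{A}^{op}$, $x'\in\mathcal{C}^{op}$ are the contravariant arguments), with components $$J(h)_{a,b,x}:\hom_{\mathcal{A}}(a,b)\times\Gamma(b,a,x,x)\to P(a,b,x,x),$$ satisfying the computation rule $J(h)_{z,z,x}(\mathrm{id}_z,k)=h_{z,x}(k)$ for all objects $z\in\mathcal{A}$, $x\in\mathcal{C}$ and all $k\in\Gamma(z,z,x,x)$.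
   Context: A dipresheaf on a category $\mathcal{B}$ is a functor $\mathcal{B}^{op}\times\mathcal{B}\to\mathbf{Set}$; more generally a difunctor is a functor $\mathcal{B}^{op}\times\mathcal{B}\to\mathcal{D}$. For difunctors $F,G:\mathcal{B}^{op}\times\mathcal{B}\to\mathcal{D}$, a dinatural transformation $\alpha:F\Rightarrow G$ is a family of morphisms $\alpha_x:F(x,x)\to G(x,x)$, $x\in\mathcal{B}$, such that for every $f:a\to b$ in $\mathcal{B}$: $G(f,\mathrm{id}_b)\circ\alpha_b\circ F(\mathrm{id}_b,f)=G(\mathrm{id}_a,f)\circ\alpha_a\circ F(f,\mathrm{id}_a)$ as maps $F(b,a)\to G(a,b)$. When $\mathcal{B}$ is a product of categories (e.g. $\mathcal{A}\times\mathcal{C}$ or $\mathcal{A}^{op}\times\mathcal{A}\times\mathcal{C}$), a functor $\mathcal{B}^{op}\times\mathcal{B}\to\mathbf{Set}$ is written with its arguments reordered, and "dinatural in $(z,x)$" means dinatural as a family indexed by objects of the product category. Note $\hom_{\mathcal{A}}(a,b)$ is covariant in $a\in\mathcal{A}^{op}$ and $b\in\mathcal{A}$. *)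

theory Defs
  imports Main
begin

record ('o, 'm) cat =
  cObj  :: "'o set"
  cArr  :: "'m set"
  cDom  :: "'m \<Rightarrow> 'o"
  cCod  :: "'m \<Rightarrow> 'o"
  cId   :: "'o \<Rightarrow> 'm"
  cComp :: "'m \<Rightarrow> 'm \<Rightarrow> 'm"   (* cComp C g f = g \<circ> f *)

definition category :: "('o, 'm) cat \<Rightarrow> bool" where
  "category C \<longleftrightarrow>
     (\<forall>f\<in>cArr C. cDom C f \<in> cObj C \<and> cCod C f \<in> cObj C) \<and>
     (\<forall>a\<in>cObj C. cId C a \<in> cArr C \<and> cDom C (cId C a) = a \<and> cCod C (cId C a) = a) \<and>
     (\<forall>f\<in>cArr C. \<forall>g\<in>cArr C. cCod C f = cDom C g \<longrightarrow>
        cComp C g f \<in> cArr C \<and> cDom C (cComp C g f) = cDom C f \<and> cCod C (cComp C g f) = cCod C g) \<and>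
     (\<forall>f\<in>cArr C. cComp C (cId C (cCod C f)) f = f \<and> cComp C f (cId C (cDom C f)) = f) \<and>
     (\<forall>f\<in>cArr C. \<forall>g\<in>cArr C. \<forall>h\<in>cArr C. cCod C f = cDom C g \<longrightarrow> cCod C g = cDom C h \<longrightarrow>
        cComp C h (cComp C g f) = cComp C (cComp C h g) f)"

definition op_cat :: "('o, 'm) cat \<Rightarrow> ('o, 'm) cat" where
  "op_cat C = \<lparr>cObj = cObj C, cArr = cArr C, cDom = cCod C, cCod = cDom C,
               cId = cId C, cComp = (\<lambda>g f. cComp C f g)\<rparr>"

definition prod_cat :: "('o1, 'm1) cat \<Rightarrow> ('o2, 'm2) cat \<Rightarrow> ('o1 \<times> 'o2, 'm1 \<times> 'm2) cat" where
  "prod_cat C D = \<lparr>cObj = cObj C \<times> cObj D, cArr = cArr C \<times> cArr D,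
     cDom = (\<lambda>(f, g). (cDom C f, cDom D g)), cCod = (\<lambda>(f, g). (cCod C f, cCod D g)),
     cId = (\<lambda>(a, b). (cId C a, cId D b)),
     cComp = (\<lambda>(g1, g2) (f1, f2). (cComp C g1 f1, cComp D g2 f2))\<rparr>"

definition hom :: "('o, 'm) cat \<Rightarrow> 'o \<Rightarrow> 'o \<Rightarrow> 'm set" where
  "hom C a b = {f \<in> cArr C. cDom C f = a \<and> cCod C f = b}"

definition set_functor :: "('o, 'm) cat \<Rightarrow> ('o \<Rightarrow> 'e set) \<Rightarrow> ('m \<Rightarrow> 'e \<Rightarrow> 'e) \<Rightarrow> bool" where
  "set_functor D Fo Fm \<longleftrightarrow>
     (\<forall>f\<in>cArr D. \<forall>u\<in>Fo (cDom D f). Fm f u \<in> Fo (cCod D f)) \<and>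
     (\<forall>a\<in>cObj D. \<forall>u\<in>Fo a. Fm (cId D a) u = u) \<and>
     (\<forall>f\<in>cArr D. \<forall>g\<in>cArr D. cCod D f = cDom D g \<longrightarrow>
        (\<forall>u\<in>Fo (cDom D f). Fm (cComp D g f) u = Fm g (Fm f u)))"

definition dinatural ::
  "('o, 'm) cat \<Rightarrow> ('o \<times> 'o \<Rightarrow> 'e set) \<Rightarrow> ('m \<times> 'm \<Rightarrow> 'e \<Rightarrow> 'e)
     \<Rightarrow> ('o \<times> 'o \<Rightarrow> 'p set) \<Rightarrow> ('m \<times> 'm \<Rightarrow> 'p \<Rightarrow> 'p) \<Rightarrow> ('o \<Rightarrow> 'e \<Rightarrow> 'p) \<Rightarrow> bool" where
  "dinatural B Fo Fm Go Gm \<alpha> \<longleftrightarrow>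
     set_functor (prod_cat (op_cat B) B) Fo Fm \<and>
     set_functor (prod_cat (op_cat B) B) Go Gm \<and>
     (\<forall>x\<in>cObj B. \<forall>u\<in>Fo (x, x). \<alpha> x u \<in> Go (x, x)) \<and>
     (\<forall>f\<in>cArr B. \<forall>u\<in>Fo (cCod B f, cDom B f).
        Gm (f, cId B (cCod B f)) (\<alpha> (cCod B f) (Fm (cId B (cCod B f), f) u)) =
        Gm (cId B (cDom B f), f) (\<alpha> (cDom B f) (Fm (f, cId B (cDom B f)) u)))"

end

theory Submission
  imports Defs
begin

abbreviation D4 :: "('a, 'm) cat \<Rightarrow> ('c, 'n) cat \<Rightarrow> _" where
  "D4 A C \<equiv> prod_cat (prod_cat (op_cat A) A) (prod_cat (op_cat C) C)"

lemma sf4_map: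
  assumes "set_functor (D4 A C) Fo Fm" "f1 \<in> cArr A" "f2 \<in> cArr A" "k1 \<in> cArr C" "k2 \<in> cArr C"
    "u \<in> Fo ((cCod A f1, cDom A f2), (cCod C k1, cDom C k2))"
  shows "Fm ((f1, f2), (k1, k2)) u \<in> Fo ((cDom A f1, cCod A f2), (cDom C k1, cCod C k2))"
  using assms unfolding set_functor_def prod_cat_def op_cat_def by force

lemma sf4_id:
  assumes "set_functor (D4 A C) Fo Fm" "a \<in> cObj A" "b \<in> cObj A" "x \<in> cObj C" "y \<in> cObj C"
    "u \<in> Fo ((a, b), (x, y))"
  shows "Fm ((cId A a, cId A b), (cId C x, cId C y)) u = u"
  using assms unfolding set_functor_def prod_cat_def op_cat_def by force

lemma sf4_comp:
  assumes "set_functor (D4 A C) Fo Fm" "f1 \<in> cArr A" "f2 \<in> cArr A" "k1 \<in> cArr C" "k2 \<in> cArr C"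
    "g1 \<in> cArr A" "g2 \<in> cArr A" "l1 \<in> cArr C" "l2 \<in> cArr C"
    "cDom A f1 = cCod A g1" "cCod A f2 = cDom A g2" "cDom C k1 = cCod C l1" "cCod C k2 = cDom C l2"
    "u \<in> Fo ((cCod A f1, cDom A f2), (cCod C k1, cDom C k2))"
  shows "Fm ((cComp A f1 g1, cComp A g2 f2), (cComp C k1 l1, cComp C l2 k2)) u
         = Fm ((g1, g2), (l1, l2)) (Fm ((f1, f2), (k1, k2)) u)"
proof -
  have "\<forall>f\<in>cArr (D4 A C). \<forall>g\<in>cArr (D4 A C). cCod (D4 A C) f = cDom (D4 A C) g \<longrightarrow>
        (\<forall>u\<in>Fo (cDom (D4 A C) f). Fm (cComp (D4 A C) g f) u = Fm g (Fm f u))"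
    using assms(1) unfolding set_functor_def by blast
  from bspec[OF bspec[OF this, of "((f1, f2), (k1, k2))"], of "((g1, g2), (l1, l2))"] assms(2-)
  show ?thesis unfolding prod_cat_def op_cat_def by auto
qed

lemma op_simps[simp]: "cObj (op_cat C) = cObj C" "cArr (op_cat C) = cArr C" "cDom (op_cat C) = cCod C"
  "cCod (op_cat C) = cDom C" "cId (op_cat C) = cId C" "cComp (op_cat C) g f = cComp C f g"
  by (simp_all add: op_cat_def)
lemma prod_simps[simp]: "cObj (prod_cat C D) = cObj C \<times> cObj D" "cArr (prod_cat C D) = cArr C \<times> cArr D"
  "cDom (prod_cat C D) (f, g) = (cDom C f, cDom D g)"
  "cCod (prod_cat C D) (f, g) = (cCod C f, cCod D g)"
  "cId (prod_cat C D) (a, b) = (cId C a, cId D b)"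
  "cComp (prod_cat C D) (g1, g2) (f1, f2) = (cComp C g1 f1, cComp D g2 f2)"
  by (simp_all add: prod_cat_def)

locale catl = fixes A :: "('o,'m) cat" assumes cat: "category A"
begin
lemma dom_in[simp]: "f \<in> cArr A \<Longrightarrow> cDom A f \<in> cObj A" using cat unfolding category_def by blast
lemma cod_in[simp]: "f \<in> cArr A \<Longrightarrow> cCod A f \<in> cObj A" using cat unfolding category_def by blast
lemma id_arr[simp]: "a \<in> cObj A \<Longrightarrow> cId A a \<in> cArr A" using cat unfolding category_def by blast
lemma id_dom[simp]: "a \<in> cObj A \<Longrightarrow> cDom A (cId A a) = a" using cat unfolding category_def by blast
lemma id_cod[simp]: "a \<in> cObj A \<Longrightarrow> cCod A (cId A a) = a" using cat unfolding category_def by blast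
lemma comp_arr[simp]: "f \<in> cArr A \<Longrightarrow> g \<in> cArr A \<Longrightarrow> cCod A f = cDom A g \<Longrightarrow> cComp A g f \<in> cArr A"
  using cat unfolding category_def by blast
lemma comp_dom[simp]: "f \<in> cArr A \<Longrightarrow> g \<in> cArr A \<Longrightarrow> cCod A f = cDom A g \<Longrightarrow> cDom A (cComp A g f) = cDom A f"
  using cat unfolding category_def by blast
lemma comp_cod[simp]: "f \<in> cArr A \<Longrightarrow> g \<in> cArr A \<Longrightarrow> cCod A f = cDom A g \<Longrightarrow> cCod A (cComp A g f) = cCod A g"
  using cat unfolding category_def by blast
lemma idl: "f \<in> cArr A \<Longrightarrow> cCod A f = b \<Longrightarrow> cComp A (cId A b) f = f" using cat unfolding category_def by blast
lemma idr: "f \<in> cArr A \<Longrightarrow> cDom A f = b \<Longrightarrow> cComp A f (cId A b) = f" using cat unfolding category_def by blast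
lemma assoc: "f \<in> cArr A \<Longrightarrow> g \<in> cArr A \<Longrightarrow> h \<in> cArr A \<Longrightarrow> cCod A f = cDom A g \<Longrightarrow> cCod A g = cDom A h \<Longrightarrow>
        cComp A h (cComp A g f) = cComp A (cComp A h g) f" using cat unfolding category_def by blast
end

lemma sf4_map':
  assumes "set_functor (D4 A C) Fo Fm" "f1 \<in> cArr A" "f2 \<in> cArr A" "k1 \<in> cArr C" "k2 \<in> cArr C"
    "cDom A f1 = a'" "cCod A f2 = b'" "cDom C k1 = x'" "cCod C k2 = y'"
    "cCod A f1 = a" "cDom A f2 = b" "cCod C k1 = x" "cDom C k2 = y"
    "u \<in> Fo ((a, b), (x, y))"
  shows "Fm ((f1, f2), (k1, k2)) u \<in> Fo ((a', b'), (x', y'))"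
  using sf4_map[OF assms(1-5)] assms(6-) by blast

lemma sf4_fold:
  assumes "set_functor (D4 A C) Fo Fm" "f1 \<in> cArr A" "f2 \<in> cArr A" "k1 \<in> cArr C" "k2 \<in> cArr C"
    "g1 \<in> cArr A" "g2 \<in> cArr A" "l1 \<in> cArr C" "l2 \<in> cArr C"
    "cDom A f1 = cCod A g1" "cCod A f2 = cDom A g2" "cDom C k1 = cCod C l1" "cCod C k2 = cDom C l2"
    "cCod A f1 = a" "cDom A f2 = b" "cCod C k1 = x" "cDom C k2 = y"
    "u \<in> Fo ((a, b), (x, y))"
  shows "Fm ((g1, g2), (l1, l2)) (Fm ((f1, f2), (k1, k2)) u) =
    Fm ((cComp A f1 g1, cComp A g2 f2), (cComp C k1 l1, cComp C l2 k2)) u"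
  using sf4_comp[OF assms(1-13)] assms(14-) by simp

context
  fixes A :: "('a, 'm) cat" and C :: "('c, 'n) cat"
    and \<Gamma>o :: "('a \<times> 'a) \<times> ('c \<times> 'c) \<Rightarrow> 'e set" and \<Gamma>m :: "('m \<times> 'm) \<times> ('n \<times> 'n) \<Rightarrow> 'e \<Rightarrow> 'e"
    and Po :: "('a \<times> 'a) \<times> ('c \<times> 'c) \<Rightarrow> 'p set" and Pm :: "('m \<times> 'm) \<times> ('n \<times> 'n) \<Rightarrow> 'p \<Rightarrow> 'p"
    and h :: "'a \<times> 'c \<Rightarrow> 'e \<Rightarrow> 'p"
  assumes cA: "category A" and cC: "category C"
    and G: "set_functor (prod_cat (prod_cat (op_cat A) A) (prod_cat (op_cat C) C)) \<Gamma>o \<Gamma>m"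
    and P: "set_functor (prod_cat (prod_cat (op_cat A) A) (prod_cat (op_cat C) C)) Po Pm"
    and H: "dinatural (prod_cat A C)
           (\<lambda>((z', x'), (z, x)). \<Gamma>o ((z', z), (x', x)))
           (\<lambda>((f1, k1), (f2, k2)). \<Gamma>m ((f1, f2), (k1, k2)))
           (\<lambda>((z', x'), (z, x)). Po ((z', z), (x', x)))
           (\<lambda>((f1, k1), (f2, k2)). Pm ((f1, f2), (k1, k2)))
           h"
begin

interpretation a: catl A by unfold_locales (rule cA)
interpretation c: catl C by unfold_locales (rule cC)

lemma h_in: "z \<in> cObj A \<Longrightarrow> x \<in> cObj C \<Longrightarrow> w \<in> \<Gamma>o ((z, z), (x, x)) \<Longrightarrow> h (z, x) w \<in> Po ((z, z), (x, x))"
  using H unfolding dinatural_def by auto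

lemma h_din:
  assumes "f \<in> cArr A" "k \<in> cArr C" "w \<in> \<Gamma>o ((cCod A f, cDom A f), (cCod C k, cDom C k))"
  shows "Pm ((f, cId A (cCod A f)), (k, cId C (cCod C k))) (h (cCod A f, cCod C k) (\<Gamma>m ((cId A (cCod A f), f), (cId C (cCod C k), k)) w))
   = Pm ((cId A (cDom A f), f), (cId C (cDom C k), k)) (h (cDom A f, cDom C k) (\<Gamma>m ((f, cId A (cDom A f)), (k, cId C (cDom C k))) w))"
proof -
  have "\<forall>f\<in>cArr (prod_cat A C). \<forall>u\<in>(\<lambda>((z', x'), (z, x)). \<Gamma>o ((z', z), (x', x))) (cCod (prod_cat A C) f, cDom (prod_cat A C) f).
        (\<lambda>((f1, k1), (f2, k2)). Pm ((f1, f2), (k1, k2))) (f, cId (prod_cat A C) (cCod (prod_cat A C) f)) (h (cCod (prod_cat A C) f) ((\<lambda>((f1, k1), (f2, k2)). \<Gamma>m ((f1, f2), (k1, k2))) (cId (prod_cat A C) (cCod (prod_cat A C) f), f) u)) =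
        (\<lambda>((f1, k1), (f2, k2)). Pm ((f1, f2), (k1, k2))) (cId (prod_cat A C) (cDom (prod_cat A C) f), f) (h (cDom (prod_cat A C) f) ((\<lambda>((f1, k1), (f2, k2)). \<Gamma>m ((f1, f2), (k1, k2))) (f, cId (prod_cat A C) (cDom (prod_cat A C) f)) u))"
    using H unfolding dinatural_def by blast
  from bspec[OF this, of "(f, k)"] assms show ?thesis by simp
qed

lemmas Gf = sf4_fold[OF G] sf4_map'[OF G]
lemmas Pf = sf4_fold[OF P] sf4_map'[OF P]

lemma din_main:
  assumes f: "f \<in> cArr A" and g: "g \<in> cArr A" and k: "k \<in> cArr C" and u: "u \<in> cArr A"
    and ud: "cDom A u = cCod A f" and uc: "cCod A u = cDom A g"
    and \<gamma>: "\<gamma> \<in> \<Gamma>o ((cCod A g, cDom A f), (cCod C k, cDom C k))"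
  shows "Pm ((cId A (cDom A f), cId A (cCod A g)), (k, cId C (cCod C k)))
     (Pm ((cId A (cDom A f), cComp A g (cComp A u f)), (cId C (cCod C k), cId C (cCod C k)))
       (h (cDom A f, cCod C k) (\<Gamma>m ((cComp A g (cComp A u f), cId A (cDom A f)), (cId C (cCod C k), cId C (cCod C k)))
          (\<Gamma>m ((cId A (cCod A g), cId A (cDom A f)), (cId C (cCod C k), k)) \<gamma>))))
   = Pm ((f, g), (cId C (cDom C k), k))
     (Pm ((cId A (cCod A f), u), (cId C (cDom C k), cId C (cDom C k)))
       (h (cCod A f, cDom C k) (\<Gamma>m ((u, cId A (cCod A f)), (cId C (cDom C k), cId C (cDom C k)))
          (\<Gamma>m ((g, f), (k, cId C (cDom C k))) \<gamma>))))"
  (is "?L = ?R")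
proof -
  define a1 where "a1 = cCod A f"
  define a2 where "a2 = cDom A f"
  define b2 where "b2 = cCod A g"
  define b1 where "b1 = cDom A g"
  define x1 where "x1 = cDom C k"
  define x2 where "x2 = cCod C k"
  define gu where "gu = cComp A g u"
  have [simp]: "a1 \<in> cObj A" "a2 \<in> cObj A" "b2 \<in> cObj A" "x1 \<in> cObj C" "x2 \<in> cObj C"
    unfolding a1_def a2_def b2_def x1_def x2_def using f g k by auto
  have [simp]: "cCod A f = a1" "cDom A f = a2" "cCod A g = b2" "cDom C k = x1" "cCod C k = x2"
    "cDom A u = a1" "cDom A g = b1" "cCod A u = b1"
    using ud uc by (auto simp: a1_def a2_def b1_def b2_def x1_def x2_def)
  have [simp]: "gu \<in> cArr A" "cDom A gu = a1" "cCod A gu = b2"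
    using f g u by (auto simp: gu_def)
  have gueq: "cComp A g u = gu" by (simp add: gu_def)
  have [simp]: "cComp A g (cComp A u f) = cComp A gu f" using a.assoc[OF f u g] gueq by simp
  note gueq[simp]
  have \<gamma>': "\<gamma> \<in> \<Gamma>o ((b2, a2), (x2, x1))" using \<gamma> by simp
  note simps = f g k u \<gamma>' a.idl a.idr c.idl c.idr Gf Pf h_in
  have s1: "?L = Pm ((cId A a2, cComp A gu f), (k, cId C x2)) (h (a2, x2) (\<Gamma>m ((cComp A gu f, cId A a2), (cId C x2, k)) \<gamma>))"
    by (simp add: simps)
  also have "\<dots> = Pm ((cId A a2, gu), (k, cId C x2)) (Pm ((cId A a2, f), (cId C x2, cId C x2)) (h (a2, x2) (\<Gamma>m ((f, cId A a2), (cId C x2, cId C x2)) (\<Gamma>m ((gu, cId A a2), (cId C x2, k)) \<gamma>))))"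
    by (simp add: simps)
  also have "\<dots> = Pm ((cId A a2, gu), (k, cId C x2)) (Pm ((f, cId A a1), (cId C x2, cId C x2)) (h (a1, x2) (\<Gamma>m ((cId A a1, f), (cId C x2, cId C x2)) (\<Gamma>m ((gu, cId A a2), (cId C x2, k)) \<gamma>))))"
    using h_din[of f "cId C x2" "\<Gamma>m ((gu, cId A a2), (cId C x2, k)) \<gamma>"] by (simp add: simps)
  also have "\<dots> = Pm ((f, gu), (k, cId C x2)) (h (a1, x2) (\<Gamma>m ((gu, f), (cId C x2, k)) \<gamma>))"
    by (simp add: simps)
  also have "\<dots> = Pm ((f, gu), (cId C x1, cId C x2)) (Pm ((cId A a1, cId A a1), (k, cId C x2)) (h (a1, x2) (\<Gamma>m ((cId A a1, cId A a1), (cId C x2, k)) (\<Gamma>m ((gu, f), (cId C x2, cId C x1)) \<gamma>))))"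
    by (simp add: simps)
  also have "\<dots> = Pm ((f, gu), (cId C x1, cId C x2)) (Pm ((cId A a1, cId A a1), (cId C x1, k)) (h (a1, x1) (\<Gamma>m ((cId A a1, cId A a1), (k, cId C x1)) (\<Gamma>m ((gu, f), (cId C x2, cId C x1)) \<gamma>))))"
    using h_din[of "cId A a1" k "\<Gamma>m ((gu, f), (cId C x2, cId C x1)) \<gamma>"] by (simp add: simps)
  also have "\<dots> = ?R"
    by (simp add: simps)
  finally show ?thesis .
qed


lemma Ffun: "set_functor (prod_cat (op_cat (prod_cat (op_cat A) (prod_cat A C))) (prod_cat (op_cat A) (prod_cat A C)))
             (\<lambda>((a', b', x'), (a, b, x)). hom A a b \<times> \<Gamma>o ((b', a'), (x', x)))
             (\<lambda>((f1, g1, k1), (f2, g2, k2)).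
                (\<lambda>(u, \<gamma>). (cComp A g2 (cComp A u f2), \<Gamma>m ((g1, f1), (k1, k2)) \<gamma>)))"
  unfolding set_functor_def apply (simp add: hom_def split_paired_all)
  apply safe apply (auto simp: hom_def a.idl a.idr sf4_map[OF G] sf4_id[OF G] sf4_comp[OF G] a.assoc)
  done

lemma Gfun: "set_functor (prod_cat (op_cat (prod_cat (op_cat A) (prod_cat A C))) (prod_cat (op_cat A) (prod_cat A C)))
             (\<lambda>((a', b', x'), (a, b, x)). Po ((a, b), (x', x)))
             (\<lambda>((f1, g1, k1), (f2, g2, k2)). Pm ((f2, g2), (k1, k2)))"
  unfolding set_functor_def apply (simp add: split_paired_all)
  apply safe apply (auto simp: a.idl a.idr sf4_map[OF P] sf4_id[OF P] sf4_comp[OF P] a.assoc)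
  done

lemma main:
  shows "\<exists>J :: 'a \<times> 'a \<times> 'c \<Rightarrow> 'm \<times> 'e \<Rightarrow> 'p.
           dinatural (prod_cat (op_cat A) (prod_cat A C))
             (\<lambda>((a', b', x'), (a, b, x)). hom A a b \<times> \<Gamma>o ((b', a'), (x', x)))
             (\<lambda>((f1, g1, k1), (f2, g2, k2)).
                (\<lambda>(u, \<gamma>). (cComp A g2 (cComp A u f2), \<Gamma>m ((g1, f1), (k1, k2)) \<gamma>)))
             (\<lambda>((a', b', x'), (a, b, x)). Po ((a, b), (x', x)))
             (\<lambda>((f1, g1, k1), (f2, g2, k2)). Pm ((f2, g2), (k1, k2)))
             J
         \<and> (\<forall>z\<in>cObj A. \<forall>x\<in>cObj C. \<forall>k\<in>\<Gamma>o ((z, z), (x, x)).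
              J (z, z, x) (cId A z, k) = h (z, x) k)"
proof -
  define J :: "'a \<times> 'a \<times> 'c \<Rightarrow> 'm \<times> 'e \<Rightarrow> 'p" where "J = (\<lambda>(a, b, x) (u, \<gamma>). Pm ((cId A a, u), (cId C x, cId C x))
      (h (a, x) (\<Gamma>m ((u, cId A a), (cId C x, cId C x)) \<gamma>)))"
  have "dinatural (prod_cat (op_cat A) (prod_cat A C))
             (\<lambda>((a', b', x'), (a, b, x)). hom A a b \<times> \<Gamma>o ((b', a'), (x', x)))
             (\<lambda>((f1, g1, k1), (f2, g2, k2)).
                (\<lambda>(u, \<gamma>). (cComp A g2 (cComp A u f2), \<Gamma>m ((g1, f1), (k1, k2)) \<gamma>)))
             (\<lambda>((a', b', x'), (a, b, x)). Po ((a, b), (x', x)))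
             (\<lambda>((f1, g1, k1), (f2, g2, k2)). Pm ((f2, g2), (k1, k2)))
             J"
    unfolding dinatural_def
    apply (intro conjI Ffun Gfun)
    subgoal by (auto simp: J_def hom_def sf4_map'[OF P] sf4_map'[OF G] h_in)
    subgoal
      apply (clarsimp simp: J_def hom_def a.idl a.idr)
      apply (rule din_main)
      apply auto
      done
    done
  moreover have "\<forall>z\<in>cObj A. \<forall>x\<in>cObj C. \<forall>k\<in>\<Gamma>o ((z, z), (x, x)).
              J (z, z, x) (cId A z, k) = h (z, x) k"
    by (auto simp: J_def sf4_id[OF G] sf4_id[OF P] h_in)
  ultimately show ?thesis by blast
qed

end

theorem mainTheorem1:
  fixes A :: "('a, 'm) cat" and C :: "('c, 'n) cat"
    and \<Gamma>o :: "('a \<times> 'a) \<times> ('c \<times> 'c) \<Rightarrow> 'e set" and \<Gamma>m :: "('m \<times> 'm) \<times> ('n \<times> 'n) \<Rightarrow> 'e \<Rightarrow> 'e"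
    and Po :: "('a \<times> 'a) \<times> ('c \<times> 'c) \<Rightarrow> 'p set" and Pm :: "('m \<times> 'm) \<times> ('n \<times> 'n) \<Rightarrow> 'p \<Rightarrow> 'p"
    and h :: "'a \<times> 'c \<Rightarrow> 'e \<Rightarrow> 'p"
  assumes "category A" and "category C"
    and "set_functor (prod_cat (prod_cat (op_cat A) A) (prod_cat (op_cat C) C)) \<Gamma>o \<Gamma>m"
    and "set_functor (prod_cat (prod_cat (op_cat A) A) (prod_cat (op_cat C) C)) Po Pm"
    and "dinatural (prod_cat A C)
           (\<lambda>((z', x'), (z, x)). \<Gamma>o ((z', z), (x', x)))
           (\<lambda>((f1, k1), (f2, k2)). \<Gamma>m ((f1, f2), (k1, k2)))
           (\<lambda>((z', x'), (z, x)). Po ((z', z), (x', x)))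
           (\<lambda>((f1, k1), (f2, k2)). Pm ((f1, f2), (k1, k2)))
           h"
  shows "\<exists>J :: 'a \<times> 'a \<times> 'c \<Rightarrow> 'm \<times> 'e \<Rightarrow> 'p.
           dinatural (prod_cat (op_cat A) (prod_cat A C))
             (\<lambda>((a', b', x'), (a, b, x)). hom A a b \<times> \<Gamma>o ((b', a'), (x', x)))
             (\<lambda>((f1, g1, k1), (f2, g2, k2)).
                (\<lambda>(u, \<gamma>). (cComp A g2 (cComp A u f2), \<Gamma>m ((g1, f1), (k1, k2)) \<gamma>)))
             (\<lambda>((a', b', x'), (a, b, x)). Po ((a, b), (x', x)))
             (\<lambda>((f1, g1, k1), (f2, g2, k2)). Pm ((f2, g2), (k1, k2)))
             J
         \<and> (\<forall>z\<in>cObj A. \<forall>x\<in>cObj C. \<forall>k\<in>\<Gamma>o ((z, z), (x, x)).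
              J (z, z, x) (cId A z, k) = h (z, x) k)"
  using main[OF assms] .

end
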